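(* Let $0<c_1\le c_2$ be constants, let $n$ be sufficiently large, let $t\in[1,n^{0.1}]$, and let $H$ be an undirected graph on $n$ vertices in which every vertex has degree between $c_1t$ and $c_2t$ and which has no cycle of length at most $8$. For every constant $\delta>0$ there is a constant $K$ (depending only on $\delta,c_1,c_2$) such that every nonempty vertex set $C$ with $H^2[C]$ of density at least $\delta$ satisfies $|C|\le Kt$.
   Context: $H^2$ (the square of $H$) is the graph on the vertex set of $H$ in which $u\neq v$ are adjacent if and only if there is a path of length exactly $2$ between $u$ and $v$ in $H$. For a graph with $n'\ge 2$ vertices and $m'$ edges its density is $m'/\binom{n'}{2}$; a one-vertex graph has density $1$. *)

theory Defs
  imports Complex_Main
begin

definition simple_graph_on :: "nat \<Rightarrow> (nat \<Rightarrow> nat \<Rightarrow> bool) \<Rightarrow> bool" where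
  "simple_graph_on n E \<longleftrightarrow>
     (\<forall>u v. E u v \<longrightarrow> u < n \<and> v < n) \<and>
     (\<forall>u v. E u v \<longrightarrow> E v u) \<and> (\<forall>u. \<not> E u u)"

definition degree :: "nat \<Rightarrow> (nat \<Rightarrow> nat \<Rightarrow> bool) \<Rightarrow> nat \<Rightarrow> nat" where
  "degree n E v = card {u. u < n \<and> E v u}"

definition is_cycle :: "(nat \<Rightarrow> nat \<Rightarrow> bool) \<Rightarrow> nat list \<Rightarrow> bool" where
  "is_cycle E xs \<longleftrightarrow> length xs \<ge> 3 \<and> distinct xs \<and>
     (\<forall>i < length xs. E (xs ! i) (xs ! ((i + 1) mod length xs)))"

definition no_short_cycles :: "(nat \<Rightarrow> nat \<Rightarrow> bool) \<Rightarrow> nat \<Rightarrow> bool" where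
  "no_short_cycles E k \<longleftrightarrow> (\<forall>xs. is_cycle E xs \<longrightarrow> length xs > k)"

definition sq_adj :: "nat \<Rightarrow> (nat \<Rightarrow> nat \<Rightarrow> bool) \<Rightarrow> nat \<Rightarrow> nat \<Rightarrow> bool" where
  "sq_adj n E u v \<longleftrightarrow> u \<noteq> v \<and> (\<exists>w. w < n \<and> E u w \<and> E w v)"

definition induced_edges :: "(nat \<Rightarrow> nat \<Rightarrow> bool) \<Rightarrow> nat set \<Rightarrow> nat set set" where
  "induced_edges G C = {{u, v} | u v. u \<in> C \<and> v \<in> C \<and> u \<noteq> v \<and> G u v}"

definition density :: "(nat \<Rightarrow> nat \<Rightarrow> bool) \<Rightarrow> nat set \<Rightarrow> real" where
  "density G C = (if card C \<le> 1 then 1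
                  else real (card (induced_edges G C)) / real (card C choose 2))"

end

theory Submission
  imports Defs
begin


fun walk :: "(nat \<Rightarrow> nat \<Rightarrow> bool) \<Rightarrow> nat list \<Rightarrow> bool" where
  "walk E [] = True"
| "walk E [x] = True"
| "walk E (x # y # xs) = (E x y \<and> walk E (y # xs))"

lemma walk_nth: "walk E xs \<Longrightarrow> i + 1 < length xs \<Longrightarrow> E (xs ! i) (xs ! (i+1))"
proof (induction E xs arbitrary: i rule: walk.induct)
  case (3 E x y xs)
  then show ?case by (cases i) auto
qed auto

lemma walk_append: "walk E (xs @ ys) \<longleftrightarrow> walk E xs \<and> walk E ys \<and> (xs \<noteq> [] \<and> ys \<noteq> [] \<longrightarrow> E (last xs) (hd ys))"
  by (induction E xs rule: walk.induct) (cases ys; auto)+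

lemma walk_rev: "(\<And>a b. E a b \<Longrightarrow> E b a) \<Longrightarrow> walk E xs \<Longrightarrow> walk E (rev xs)"
  by (induction E xs rule: walk.induct) (auto simp: walk_append)

lemma walk_cycle:
  assumes "walk E xs" "E (last xs) (hd xs)" "length xs \<ge> 3" "distinct xs"
  shows "is_cycle E xs"
  unfolding is_cycle_def
proof (intro conjI allI impI)
  fix i assume i: "i < length xs"
  show "E (xs ! i) (xs ! ((i + 1) mod length xs))"
  proof (cases "i + 1 < length xs")
    case True then show ?thesis using walk_nth[OF assms(1)] by simp
  next
    case False
    then have "i + 1 = length xs" using i by simp
    then have "xs ! i = last xs" "xs ! ((i + 1) mod length xs) = hd xs"
      using assms(3) \<open>i + 1 = length xs\<close>
      by (auto simp: last_conv_nth hd_conv_nth, metis diff_Suc_1 last_conv_nth list.size(3) nat.distinct(1), metis hd_conv_nth list.size(3) not_numeral_le_zero)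
    then show ?thesis using assms(2) by simp
  qed
qed (use assms in auto)

lemma walk_Cons: "walk E (x # xs) \<longleftrightarrow> walk E xs \<and> (xs \<noteq> [] \<longrightarrow> E x (hd xs))"
  by (cases xs) auto

lemma unique_path:
  assumes sym: "\<And>a b. E a b \<Longrightarrow> E b a"
    and nsc: "no_short_cycles E k"
  shows "walk E P \<Longrightarrow> walk E Q \<Longrightarrow> distinct P \<Longrightarrow> distinct Q \<Longrightarrow> P \<noteq> [] \<Longrightarrow> Q \<noteq> [] \<Longrightarrow>
     hd P = hd Q \<Longrightarrow> last P = last Q \<Longrightarrow> length P + length Q \<le> k + 2 \<Longrightarrow> P = Q"
proof (induction P arbitrary: Q)
  case Nil then show ?case by simp
next
  case (Cons a P')
  obtain Q' where Q: "Q = a # Q'" using Cons.prems by (cases Q) auto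
  show ?case
  proof (cases "P' = [] \<or> Q' = []")
    case True
    then show ?thesis using Cons.prems Q
      by (metis distinct.simps(2) last.simps last_in_set list.sel(1))
  next
    case False
    then obtain b P'' c Q'' where P': "P' = b # P''" and Q': "Q' = c # Q''"
      by (meson list.exhaust)
    show ?thesis
    proof (cases "b = c")
      case True
      have "P' = Q'"
        using Cons.IH[of Q'] Cons.prems Q P' Q' True by (simp add: walk_Cons)
      then show ?thesis using Q by simp
    next
      case bc: False
      have "\<exists>x\<in>set P'. x \<in> set Q'"
        using Cons.prems Q P' Q' by (metis last_ConsR last_in_set list.discI)
      then obtain P1 z P2 where P1: "P' = P1 @ z # P2" "z \<in> set Q'" "\<forall>y\<in>set P1. y \<notin> set Q'"
        using split_list_first_prop[of P' "\<lambda>x. x \<in> set Q'"] by blast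
      then obtain Q1 Q2 where Q1: "Q' = Q1 @ z # Q2" by (meson split_list)
      define cyc where "cyc = a # P1 @ z # rev Q1"
      have dP: "distinct (a # P1 @ z # P2)" using Cons.prems P1 by simp
      have dQ: "distinct (a # Q1 @ z # Q2)" using Cons.prems Q Q1 by simp
      have wP: "walk E (a # P1 @ [z])" using Cons.prems(1) P1
        by (metis append.assoc append_Cons append_Nil walk_append)
      have wQ: "walk E (a # Q1 @ [z])" using Cons.prems(2) Q Q1
        by (metis append.assoc append_Cons append_Nil walk_append)
      have wQr: "walk E (z # rev Q1 @ [a])" using walk_rev[OF _ wQ] sym by simp
      have dcyc: "distinct cyc" unfolding cyc_def using dP dQ P1(3) Q1 by auto
      have len3: "length cyc \<ge> 3"
      proof (rule ccontr)
        assume "\<not> ?thesis"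
        then have "P1 = [] \<and> Q1 = []" unfolding cyc_def by (cases P1; cases Q1) auto
        then show False using bc P' Q' P1 Q1 by simp
      qed
      have wcyc: "walk E cyc"
      proof -
        have "walk E (z # rev Q1)" using wQr
          by (metis append_Cons walk_append)
        then show ?thesis unfolding cyc_def using wP
          by (metis append.assoc append_Cons append_Nil list.sel(1) list.simps(3) walk_append)
      qed
      have close: "E (last cyc) (hd cyc)"
      proof (cases "Q1 = []")
        case True then show ?thesis unfolding cyc_def using wQr by simp
      next
        case False
        have "walk E (rev Q1 @ [a])" using wQr by (simp add: walk_Cons)
        then have "E (last (rev Q1)) a" using False by (simp add: walk_append)
        then show ?thesis using False unfolding cyc_def by simp
      qed
      have "is_cycle E cyc" using walk_cycle[OF wcyc close len3 dcyc] .
      then have "length cyc > k" using nsc unfolding no_short_cycles_def by blast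
      moreover have "length cyc \<le> k"
        using Cons.prems(9) Q P1 Q1 unfolding cyc_def by simp
      ultimately show ?thesis by simp
    qed
  qed
qed




lemma path5_distinct:
  assumes sg: "simple_graph_on n E" and nsc: "no_short_cycles E 8"
    and e: "E v w" "E w u" "E u w'" "E w' x" and ne: "v \<noteq> u" "x \<noteq> u" "w \<noteq> w'"
  shows "distinct [v,w,u,w',x]"
proof -
  have sym: "\<And>a b. E a b \<Longrightarrow> E b a" and irr: "\<And>a. \<not> E a a"
    using sg unfolding simple_graph_on_def by auto
  have nc: "\<And>xs. is_cycle E xs \<Longrightarrow> length xs > 8" using nsc unfolding no_short_cycles_def by blast
  have c3: False if "E a b" "E b c" "E c a" "distinct [a,b,c]" for a b c
    using nc[of "[a,b,c]"] that walk_cycle[of E "[a,b,c]"] by simp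
  have c4: False if "E a b" "E b c" "E c d" "E d a" "distinct [a,b,c,d]" for a b c d
    using nc[of "[a,b,c,d]"] that walk_cycle[of E "[a,b,c,d]"] by simp
  have vw: "v \<noteq> w" "w \<noteq> u" "u \<noteq> w'" "w' \<noteq> x" using e irr by metis+
  have "v \<noteq> w'" using c3[of v w u] e ne vw sym by auto
  moreover have "w \<noteq> x" using c3[of w u w'] e ne vw sym by auto
  moreover have "v \<noteq> x" using c4[of v w u w'] e ne vw sym \<open>v \<noteq> w'\<close> by auto
  ultimately show ?thesis using vw ne by auto
qed

lemma key_count:
  assumes sg: "simple_graph_on n E" and nsc: "no_short_cycles E 8"
    and C: "C \<subseteq> {..<n}"
  defines "NB \<equiv> \<lambda>u. {w. w < n \<and> E u w}"
  defines "A \<equiv> \<lambda>u w. {v \<in> C. v \<noteq> u \<and> E v w}"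
  defines "F \<equiv> \<lambda>u. (\<Sum>w\<in>NB u. real (card (A u w)))"
  shows "(\<Sum>u\<in>C. F u ^ 2 - (\<Sum>w\<in>NB u. real (card (A u w)) ^ 2)) \<le> real (card C) ^ 2"
proof -
  have sym: "\<And>a b. E a b \<Longrightarrow> E b a" and irr: "\<And>a. \<not> E a a"
    and bd: "\<And>a b. E a b \<Longrightarrow> a < n \<and> b < n"
    using sg unfolding simple_graph_on_def by auto
  have finC: "finite C" using C finite_subset by blast
  have finNB: "finite (NB u)" for u unfolding NB_def by simp
  have finA: "finite (A u w)" for u w unfolding A_def using finC by simp
  define T where "T = (\<lambda>u. SIGMA w:NB u. SIGMA w':NB u - {w}. A u w \<times> A u w')"
  have finT: "finite (T u)" for u unfolding T_def using finNB finA by (intro finite_SigmaI) auto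
  have cardT: "real (card (T u)) = F u ^ 2 - (\<Sum>w\<in>NB u. real (card (A u w)) ^ 2)" for u
  proof -
    have "card (T u) = (\<Sum>w\<in>NB u. \<Sum>w'\<in>NB u - {w}. card (A u w) * card (A u w'))"
      unfolding T_def using finNB finA
      by (simp add: card_cartesian_product)
    then have "real (card (T u)) = (\<Sum>w\<in>NB u. real (card (A u w)) * (\<Sum>w'\<in>NB u - {w}. real (card (A u w'))))"
      by (simp add: sum_distrib_left)
    also have "\<dots> = (\<Sum>w\<in>NB u. real (card (A u w)) * (F u - real (card (A u w))))"
      unfolding F_def using finNB by (intro sum.cong refl) (simp add: sum_diff1)
    also have "\<dots> = F u * F u - (\<Sum>w\<in>NB u. real (card (A u w)) ^ 2)"
      unfolding F_def by (simp add: algebra_simps power2_eq_square sum_subtractf sum_distrib_left sum_distrib_right)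
    finally show ?thesis by (simp add: power2_eq_square)
  qed
  define g where "g = (\<lambda>(u::nat, w::nat, w'::nat, v::nat, x::nat). (v, x))"
  have inj: "inj_on g (SIGMA u:C. T u)"
  proof (rule inj_onI)
    fix p q assume p: "p \<in> (SIGMA u:C. T u)" and q: "q \<in> (SIGMA u:C. T u)" and gpq: "g p = g q"
    obtain u w w' v x where pp: "p = (u, w, w', v, x)" by (cases p) auto
    obtain u2 w2 w2' v2 x2 where qq: "q = (u2, w2, w2', v2, x2)" by (cases q) auto
    have hp: "E v w" "E w u" "E u w'" "E w' x" "v \<noteq> u" "x \<noteq> u" "w \<noteq> w'"
      using p pp sym unfolding T_def NB_def A_def by auto
    have hq: "E v2 w2" "E w2 u2" "E u2 w2'" "E w2' x2" "v2 \<noteq> u2" "x2 \<noteq> u2" "w2 \<noteq> w2'"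
      using q qq sym unfolding T_def NB_def A_def by auto
    have eq: "v2 = v" "x2 = x" using gpq pp qq unfolding g_def by auto
    have "[v,w,u,w',x] = [v2,w2,u2,w2',x2]"
      apply (rule unique_path[OF _ nsc])
      using sym path5_distinct[OF sg nsc hp] path5_distinct[OF sg nsc hq] hp hq eq by auto
    then show "p = q" using pp qq by simp
  qed
  have img: "g ` (SIGMA u:C. T u) \<subseteq> C \<times> C"
    unfolding g_def T_def A_def by auto
  have "card (SIGMA u:C. T u) \<le> card (C \<times> C)"
    using card_inj_on_le[OF inj img] finC by simp
  then have "(\<Sum>u\<in>C. card (T u)) \<le> card C ^ 2"
    using finC finT by (simp add: card_cartesian_product power2_eq_square)
  then have "(\<Sum>u\<in>C. real (card (T u))) \<le> real (card C) ^ 2"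
    by (metis of_nat_le_iff of_nat_power of_nat_sum)
  then show ?thesis using cardT by simp
qed




lemma choose2_real: "real (m choose 2) = real m * (real m - 1) / 2"
proof -
  have ev: "2 dvd (m * (m - 1))" by (simp, presburger)
  show ?thesis
  proof (cases "m = 0")
    case False
    then show ?thesis unfolding choose_two using real_of_nat_div[OF ev] by (simp add: of_nat_diff)
  qed simp
qed

lemma final_arith:
  fixes m \<delta> D c2 t \<Phi> Q :: real
  assumes m2: "m \<ge> 2" and d: "\<delta> > 0" and D0: "D \<ge> 0" and Dc: "D \<le> c2 * t" and t1: "t \<ge> 1"
    and \<Phi>: "\<Phi> \<ge> \<delta> * m * (m - 1) / 2" and cs: "\<Phi>^2 \<le> m * Q" and k: "Q - D * \<Phi> \<le> m^2"
  shows "m \<le> (1 + 2 * (c2 + 2 / \<delta> + 1) / \<delta>) * t"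
proof (rule ccontr)
  assume "\<not> ?thesis"
  then have mK: "m > (1 + 2 * (c2 + 2 / \<delta> + 1) / \<delta>) * t" by simp
  define y where "y = \<delta> * (m - 1) / 2"
  have "m - 1 > 2 * (c2 + 2 / \<delta> + 1) / \<delta> * t"
    using mK t1 by (simp add: algebra_simps)
  then have "\<delta> * (m - 1) > 2 * (c2 + 2 / \<delta> + 1) * t" using d
    by (simp add: pos_divide_less_eq mult.commute)
  moreover have "2 * (c2 + 2 / \<delta> + 1) * t = 2 * ((c2 + 2 / \<delta> + 1) * t)" by simp
  ultimately have y1: "y > (c2 + 2 / \<delta> + 1) * t" unfolding y_def by linarith
  have "(c2 + 2 / \<delta> + 1) * t = c2 * t + (2 / \<delta> + 1) * t" by (simp add: algebra_simps)
  moreover have "(2 / \<delta> + 1) * t \<ge> 2 / \<delta> + 1" using t1 d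
    by (metis mult_cancel_left1 mult_left_mono order_less_le zero_less_divide_iff zero_less_numeral
        add_pos_pos zero_less_one)
  ultimately have y2: "y > D + 2 / \<delta> + 1" using y1 Dc by linarith
  have \<Phi>y: "\<Phi> \<ge> y * m" using \<Phi> unfolding y_def by (simp add: algebra_simps)
  have m0: "m > 0" using m2 by simp
  have "y - D > 0" using y2 d by (smt (verit) divide_pos_pos)
  have a: "\<Phi> - m * D \<ge> y * m - m * D" using \<Phi>y by simp
  have b: "y * m - m * D > 0" using \<open>y - D > 0\<close> m0 by (simp add: algebra_simps)
  have "(y * m) * (y * m - m * D) \<le> \<Phi> * (\<Phi> - m * D)"
  proof (rule mult_mono)
    have "y * m > 0" using b D0 m0 by (smt (verit) mult_nonneg_nonneg mult.commute)
    then show "0 \<le> \<Phi>" using \<Phi>y by simp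
  qed (use \<Phi>y a b in \<open>auto\<close>)
  also have "\<dots> = \<Phi>^2 - m * (D * \<Phi>)" by (simp add: power2_eq_square algebra_simps)
  also have "\<dots> \<le> m * Q - m * (D * \<Phi>)" using cs by simp
  also have "\<dots> = m * (Q - D * \<Phi>)" by (simp add: algebra_simps)
  also have "\<dots> \<le> m * m^2" using k m0 by simp
  finally have "m^2 * (y * (y - D)) \<le> m^2 * m" by (simp add: power2_eq_square algebra_simps)
  then have c: "y * (y - D) \<le> m" using m0 by simp
  have "y * (y - D) > y * (2 / \<delta> + 1)"
    using y2 by (smt (verit) D0 d divide_pos_pos mult_strict_left_mono)
  also have "y * (2 / \<delta> + 1) = (m - 1) + y" unfolding y_def using d by (simp add: field_simps)
  finally have "y < 1" using c by simp
  then show False using y2 D0 d by (smt (verit) divide_pos_pos)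
qed

lemma cauchy_sum:
  fixes g :: "nat \<Rightarrow> real"
  assumes "finite A"
  shows "(\<Sum>x\<in>A. g x)^2 \<le> real (card A) * (\<Sum>x\<in>A. (g x)^2)"
proof -
  define k where "k = real (card A)"
  define s where "s = (\<Sum>x\<in>A. g x)"
  have "0 \<le> (\<Sum>x\<in>A. (k * g x - s)^2)" by (simp add: sum_nonneg)
  also have "\<dots> = (\<Sum>x\<in>A. k^2 * (g x)^2 - 2 * k * s * g x + s^2)"
    by (simp add: power2_eq_square algebra_simps)
  also have "\<dots> = k^2 * (\<Sum>x\<in>A. (g x)^2) - 2 * k * s * s + k * s^2"
    unfolding s_def k_def by (simp add: sum.distrib sum_subtractf sum_distrib_left)
  also have "\<dots> = k * (k * (\<Sum>x\<in>A. (g x)^2) - s^2)" by (simp add: power2_eq_square algebra_simps)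
  finally have "0 \<le> k * (k * (\<Sum>x\<in>A. (g x)^2) - s^2)" .
  moreover have "k \<ge> 0" unfolding k_def by simp
  ultimately have "k = 0 \<or> s^2 \<le> k * (\<Sum>x\<in>A. (g x)^2)"
    by (smt (verit) mult_pos_neg)
  moreover have "k = 0 \<Longrightarrow> s = 0" unfolding k_def s_def using assms by simp
  ultimately show ?thesis unfolding s_def k_def by (auto simp: sum_nonneg)
qed

theorem lemmaA6:
  fixes c1 c2 :: real
  assumes "0 < c1" and "c1 \<le> c2"
  shows "\<exists>N::nat. \<forall>\<delta>::real. \<delta> > 0 \<longrightarrow> (\<exists>K::real. \<forall>n t E C.
           n \<ge> N \<longrightarrow> 1 \<le> t \<longrightarrow> t \<le> real n powr 0.1 \<longrightarrow>
           simple_graph_on n E \<longrightarrow>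
           (\<forall>v<n. c1 * t \<le> real (degree n E v) \<and> real (degree n E v) \<le> c2 * t) \<longrightarrow>
           no_short_cycles E 8 \<longrightarrow>
           C \<subseteq> {..<n} \<longrightarrow> C \<noteq> {} \<longrightarrow>
           density (sq_adj n E) C \<ge> \<delta> \<longrightarrow>
           real (card C) \<le> K * t)"
proof (rule exI[of _ 0], intro allI impI)
  fix \<delta> :: real assume d: "\<delta> > 0"
  have c2: "c2 > 0" using assms by simp
  define K where "K = 1 + 2 * (c2 + 2 / \<delta> + 1) / \<delta>"
  have K1: "K \<ge> 1" unfolding K_def using c2 d by simp
  show "\<exists>K::real. \<forall>n t E C.
           n \<ge> 0 \<longrightarrow> 1 \<le> t \<longrightarrow> t \<le> real n powr 0.1 \<longrightarrow>
           simple_graph_on n E \<longrightarrow>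
           (\<forall>v<n. c1 * t \<le> real (degree n E v) \<and> real (degree n E v) \<le> c2 * t) \<longrightarrow>
           no_short_cycles E 8 \<longrightarrow>
           C \<subseteq> {..<n} \<longrightarrow> C \<noteq> {} \<longrightarrow>
           density (sq_adj n E) C \<ge> \<delta> \<longrightarrow>
           real (card C) \<le> K * t"
  proof (intro exI[of _ K] allI impI)
    fix n :: nat and t :: real and E and C :: "nat set"
    assume t1: "1 \<le> t" and sg: "simple_graph_on n E"
      and deg: "\<forall>v<n. c1 * t \<le> real (degree n E v) \<and> real (degree n E v) \<le> c2 * t"
      and nsc: "no_short_cycles E 8" and C: "C \<subseteq> {..<n}" and Cne: "C \<noteq> {}"
      and dens: "density (sq_adj n E) C \<ge> \<delta>"
    have sym: "\<And>a b. E a b \<Longrightarrow> E b a" and bd: "\<And>a b. E a b \<Longrightarrow> a < n \<and> b < n"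
      using sg unfolding simple_graph_on_def by auto
    have finC: "finite C" using C finite_subset by blast
    define m where "m = card C"
    show "real (card C) \<le> K * t"
    proof (cases "m \<le> 1")
      case True
      then have "real (card C) \<le> 1" unfolding m_def by simp
      also have "1 \<le> K * t" using K1 t1 by (metis mult_mono' mult_1 zero_le_one)
      finally show ?thesis .
    next
      case False
      then have m2: "m \<ge> 2" by simp
      define D where "D = c2 * t"
      define NB where "NB = (\<lambda>u. {w. w < n \<and> E u w})"
      define A where "A = (\<lambda>u w. {v \<in> C. v \<noteq> u \<and> E v w})"
      define F where "F = (\<lambda>u. (\<Sum>w\<in>NB u. real (card (A u w))))"
      define S where "S = (\<lambda>u. {x \<in> C. sq_adj n E u x})"
      have finNB: "finite (NB u)" for u unfolding NB_def by simp
      have finA: "finite (A u w)" for u w unfolding A_def using finC by simp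
      have key: "(\<Sum>u\<in>C. F u ^ 2 - (\<Sum>w\<in>NB u. real (card (A u w)) ^ 2)) \<le> real m ^ 2"
        using key_count[OF sg nsc C] unfolding F_def NB_def A_def m_def by simp
      have Abd: "real (card (A u w)) \<le> D" if "w \<in> NB u" for u w
      proof -
        have w: "w < n" using that unfolding NB_def by simp
        have "A u w \<subseteq> {v. v < n \<and> E w v}" unfolding A_def using C sym by auto
        then have "card (A u w) \<le> degree n E w" unfolding degree_def by (intro card_mono) auto
        then show ?thesis using deg w unfolding D_def by (meson of_nat_le_iff order_trans)
      qed
      have sq: "(\<Sum>w\<in>NB u. real (card (A u w)) ^ 2) \<le> D * F u" for u
      proof -
        have "(\<Sum>w\<in>NB u. real (card (A u w)) ^ 2) \<le> (\<Sum>w\<in>NB u. D * real (card (A u w)))"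
          using Abd by (intro sum_mono) (simp add: power2_eq_square mult_right_mono)
        then show ?thesis unfolding F_def by (simp add: sum_distrib_left)
      qed
      have SF: "real (card (S u)) \<le> F u" for u
      proof -
        have "S u \<subseteq> (\<Union>w\<in>NB u. A u w)"
          unfolding S_def A_def NB_def sq_adj_def using sym by auto
        then have "card (S u) \<le> card (\<Union>w\<in>NB u. A u w)"
          using finNB finA by (intro card_mono) auto
        also have "\<dots> \<le> (\<Sum>w\<in>NB u. card (A u w))" using finNB finA by (intro card_UN_le) auto
        finally show ?thesis unfolding F_def by (metis of_nat_le_iff of_nat_sum)
      qed
      have I_le: "card (induced_edges (sq_adj n E) C) \<le> (\<Sum>u\<in>C. card (S u))"
      proof -
        have "induced_edges (sq_adj n E) C \<subseteq> (\<lambda>(u, x). {u, x}) ` (SIGMA u:C. S u)"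
          unfolding induced_edges_def S_def by auto
        moreover have finS: "finite (SIGMA u:C. S u)" using finC unfolding S_def by auto
        ultimately have "card (induced_edges (sq_adj n E) C) \<le> card ((\<lambda>(u, x). {u, x}) ` (SIGMA u:C. S u))"
          by (intro card_mono) auto
        also have "\<dots> \<le> card (SIGMA u:C. S u)" using card_image_le[OF finS] by blast
        finally have "card (induced_edges (sq_adj n E) C) \<le> card (SIGMA u:C. S u)" .
        also have "\<dots> = (\<Sum>u\<in>C. card (S u))" using finC by (simp add: S_def)
        finally show ?thesis .
      qed
      have "density (sq_adj n E) C = real (card (induced_edges (sq_adj n E) C)) / real (m choose 2)"
        unfolding density_def using False m_def by simp
      also have "\<dots> = real (card (induced_edges (sq_adj n E) C)) / (real m * (real m - 1) / 2)"
        by (simp only: choose2_real)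
      finally have "density (sq_adj n E) C = real (card (induced_edges (sq_adj n E) C)) / (real m * (real m - 1) / 2)" .
      then have "\<delta> * (real m * (real m - 1) / 2) \<le> real (card (induced_edges (sq_adj n E) C))"
        using dens m2 by (simp add: pos_le_divide_eq)
      also have "\<dots> \<le> (\<Sum>u\<in>C. real (card (S u)))" using I_le by (metis of_nat_le_iff of_nat_sum)
      also have "\<dots> \<le> (\<Sum>u\<in>C. F u)" using SF by (intro sum_mono) auto
      finally have Phi: "(\<Sum>u\<in>C. F u) \<ge> \<delta> * real m * (real m - 1) / 2" by simp
      have cs: "(\<Sum>u\<in>C. F u)^2 \<le> real m * (\<Sum>u\<in>C. (F u)^2)"
        using cauchy_sum[OF finC] unfolding m_def .
      have "(\<Sum>u\<in>C. (F u)^2) - D * (\<Sum>u\<in>C. F u) \<le> (\<Sum>u\<in>C. F u ^ 2 - (\<Sum>w\<in>NB u. real (card (A u w)) ^ 2))"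
        using sq by (simp add: sum_distrib_left sum_subtractf[symmetric] sum_mono)
      then have k: "(\<Sum>u\<in>C. (F u)^2) - D * (\<Sum>u\<in>C. F u) \<le> real m ^ 2" using key by linarith
      have "real m \<le> K * t"
        unfolding K_def
        by (rule final_arith[OF _ d _ _ t1 Phi cs k]) (use m2 c2 t1 in \<open>auto simp: D_def\<close>)
      then show ?thesis unfolding m_def .
    qed
  qed
qed


end
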